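(* (1) There is a saturated structure $\mathfrak A_{\mathrm{sat}}$ of cardinality $2^\omega$ such that $\mathrm{Inv}(\mathrm{Pol}^\omega(\mathfrak A_{\mathrm{sat}}))\neq\langle\mathfrak A_{\mathrm{sat}}\rangle_{\mathrm{pp}}$. (2) There is a saturated structure $\mathfrak A_{\mathrm{sat}}$ of cardinality $2^\omega$ such that $\mathrm{Inv}(\mathrm{Pol}(\mathfrak A_{\mathrm{sat}}))\cap\langle\mathfrak A_{\mathrm{sat}}\rangle_{\mathrm{fo}}\neq\langle\mathfrak A_{\mathrm{sat}}\rangle_{\mathrm{pp}}$. (3) There is a structure $\mathfrak A$ such that $\mathrm{Inv}(\mathrm{Pol}^\omega(\mathfrak A))\cap\langle\mathfrak A\rangle_{\mathrm{fo}}\neq\langle\mathfrak A\rangle_{\mathrm{pp}}$.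
   Context: Structures are over relational signatures (possibly with constants). $\langle\mathfrak A\rangle_{\mathrm{fo}}$, $\langle\mathfrak A\rangle_{\mathrm{pp}}$: relations on $A$ definable without parameters by first-order, resp. primitive positive formulas (built from atoms, equalities, $\bot$ using $\wedge,\exists$). $\mathrm{Pol}(\mathfrak A)$: homomorphisms $\mathfrak A^k\to\mathfrak A$ for finite $k$; $\mathrm{Pol}^\omega(\mathfrak A)$: homomorphisms $\mathfrak A^\kappa\to\mathfrak A$ for $\kappa\le\omega$ (direct powers). $\mathrm{Inv}(F)$: relations on $A$ preserved coordinatewise by all $f\in F$. An infinite structure $\mathfrak A$ is saturated if it is $|A|$-saturated: for every sequence of fewer than $|A|$ parameters, every set of first-order formulas in one free variable over them consistent with the theory of $\mathfrak A$ with these parameters named is realised in $A$. *)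

theory Defs
  imports "HOL-Library.FuncSet"
begin

record ('a, 'r, 'c) struc =
  carr :: "'a set"
  ar   :: "'r \<Rightarrow> nat"
  rel  :: "'r \<Rightarrow> 'a list set"
  cst  :: "'c \<Rightarrow> 'a"

definition wf_struc :: "('a, 'r, 'c) struc \<Rightarrow> bool" where
  "wf_struc A \<longleftrightarrow> carr A \<noteq> {} \<and> (\<forall>c. cst A c \<in> carr A) \<and>
     (\<forall>R. rel A R \<subseteq> {xs. length xs = ar A R \<and> set xs \<subseteq> carr A})"

datatype 'k trm = Var nat | Cst 'k

datatype ('r, 'k) fm =
    Bot
  | Eq "'k trm" "'k trm"
  | Atom 'r "'k trm list"
  | Neg "('r, 'k) fm"
  | Conj "('r, 'k) fm" "('r, 'k) fm"
  | Ex nat "('r, 'k) fm"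

fun tvars :: "'k trm \<Rightarrow> nat set" where
  "tvars (Var i) = {i}"
| "tvars (Cst c) = {}"

fun tcsts :: "'k trm \<Rightarrow> 'k set" where
  "tcsts (Var i) = {}"
| "tcsts (Cst c) = {c}"

fun FV :: "('r, 'k) fm \<Rightarrow> nat set" where
  "FV Bot = {}"
| "FV (Eq s t) = tvars s \<union> tvars t"
| "FV (Atom R ts) = (\<Union>t\<in>set ts. tvars t)"
| "FV (Neg \<phi>) = FV \<phi>"
| "FV (Conj \<phi> \<psi>) = FV \<phi> \<union> FV \<psi>"
| "FV (Ex n \<phi>) = FV \<phi> - {n}"

fun csts :: "('r, 'k) fm \<Rightarrow> 'k set" where
  "csts Bot = {}"
| "csts (Eq s t) = tcsts s \<union> tcsts t"
| "csts (Atom R ts) = (\<Union>t\<in>set ts. tcsts t)"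
| "csts (Neg \<phi>) = csts \<phi>"
| "csts (Conj \<phi> \<psi>) = csts \<phi> \<union> csts \<psi>"
| "csts (Ex n \<phi>) = csts \<phi>"

fun is_pp :: "('r, 'k) fm \<Rightarrow> bool" where
  "is_pp Bot = True"
| "is_pp (Eq s t) = True"
| "is_pp (Atom R ts) = True"
| "is_pp (Neg \<phi>) = False"
| "is_pp (Conj \<phi> \<psi>) = (is_pp \<phi> \<and> is_pp \<psi>)"
| "is_pp (Ex n \<phi>) = is_pp \<phi>"

fun teval :: "('k \<Rightarrow> 'a) \<Rightarrow> (nat \<Rightarrow> 'a) \<Rightarrow> 'k trm \<Rightarrow> 'a" where
  "teval ci e (Var i) = e i"
| "teval ci e (Cst c) = ci c"

fun sat :: "'a set \<Rightarrow> ('r \<Rightarrow> 'a list set) \<Rightarrow> ('k \<Rightarrow> 'a) \<Rightarrow> (nat \<Rightarrow> 'a)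
              \<Rightarrow> ('r, 'k) fm \<Rightarrow> bool" where
  "sat D rl ci e Bot = False"
| "sat D rl ci e (Eq s t) = (teval ci e s = teval ci e t)"
| "sat D rl ci e (Atom R ts) = (map (teval ci e) ts \<in> rl R)"
| "sat D rl ci e (Neg \<phi>) = (\<not> sat D rl ci e \<phi>)"
| "sat D rl ci e (Conj \<phi> \<psi>) = (sat D rl ci e \<phi> \<and> sat D rl ci e \<psi>)"
| "sat D rl ci e (Ex n \<phi>) = (\<exists>a\<in>D. sat D rl ci (e(n := a)) \<phi>)"

text \<open>A relation on the carrier is a pair (arity n, set of n-tuples).\<close>

definition tuples :: "('a, 'r, 'c) struc \<Rightarrow> nat \<Rightarrow> 'a list set" where
  "tuples A n = {xs. length xs = n \<and> set xs \<subseteq> carr A}"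

definition defined_by :: "('a, 'r, 'c) struc \<Rightarrow> nat \<Rightarrow> ('r, 'c) fm \<Rightarrow> 'a list set" where
  "defined_by A n \<phi> = {xs \<in> tuples A n. sat (carr A) (rel A) (cst A) (\<lambda>i. xs ! i) \<phi>}"

definition fo_rels :: "('a, 'r, 'c) struc \<Rightarrow> (nat \<times> 'a list set) set" where
  "fo_rels A = {(n, R). \<exists>\<phi>. FV \<phi> \<subseteq> {..<n} \<and> R = defined_by A n \<phi>}"

definition pp_rels :: "('a, 'r, 'c) struc \<Rightarrow> (nat \<times> 'a list set) set" where
  "pp_rels A = {(n, R). \<exists>\<phi>. is_pp \<phi> \<and> FV \<phi> \<subseteq> {..<n} \<and> R = defined_by A n \<phi>}"

text \<open>An operation of arity \<open>I\<close> (an index set, \<open>{..<k}\<close> or \<open>UNIV\<close> for \<open>\<omega>\<close>)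
acts on elements of the direct power \<open>A^I\<close>, represented as functions in
\<open>I \<rightarrow>\<^sub>E carr A\<close>.\<close>

definition preserves :: "('a, 'r, 'c) struc \<Rightarrow> nat set \<Rightarrow> ((nat \<Rightarrow> 'a) \<Rightarrow> 'a)
                          \<Rightarrow> nat \<Rightarrow> 'a list set \<Rightarrow> bool" where
  "preserves A I f n R \<longleftrightarrow>
     (\<forall>ts. length ts = n \<and> set ts \<subseteq> (I \<rightarrow>\<^sub>E carr A) \<and> (\<forall>i\<in>I. map (\<lambda>t. t i) ts \<in> R)
        \<longrightarrow> map f ts \<in> R)"

definition is_hom_power :: "('a, 'r, 'c) struc \<Rightarrow> nat set \<Rightarrow> ((nat \<Rightarrow> 'a) \<Rightarrow> 'a) \<Rightarrow> bool" where
  "is_hom_power A I f \<longleftrightarrow>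
     (\<forall>x \<in> I \<rightarrow>\<^sub>E carr A. f x \<in> carr A) \<and>
     (\<forall>c. f (\<lambda>i\<in>I. cst A c) = cst A c) \<and>
     (\<forall>R. preserves A I f (ar A R) (rel A R))"

definition Pol :: "('a, 'r, 'c) struc \<Rightarrow> (nat set \<times> ((nat \<Rightarrow> 'a) \<Rightarrow> 'a)) set" where
  "Pol A = {(I, f). (\<exists>k\<ge>1. I = {..<k}) \<and> is_hom_power A I f}"

definition Pol_omega :: "('a, 'r, 'c) struc \<Rightarrow> (nat set \<times> ((nat \<Rightarrow> 'a) \<Rightarrow> 'a)) set" where
  "Pol_omega A = {(I, f). ((\<exists>k\<ge>1. I = {..<k}) \<or> I = UNIV) \<and> is_hom_power A I f}"

definition Inv :: "('a, 'r, 'c) struc \<Rightarrow> (nat set \<times> ((nat \<Rightarrow> 'a) \<Rightarrow> 'a)) set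
                     \<Rightarrow> (nat \<times> 'a list set) set" where
  "Inv A F = {(n, R). R \<subseteq> tuples A n \<and> (\<forall>(I, f)\<in>F. preserves A I f n R)}"

text \<open>Formulas with parameters from the carrier are formulas over the signature
expanded by the elements of the carrier as new constants (\<open>Inr a\<close> names \<open>a\<close>).
A set of formulas in the free variable 0 is consistent with the theory of
\<open>(A, P)\<close> iff it is finitely satisfiable in \<open>A\<close>.  \<open>|P| < |A|\<close> is expressed
as: there is no injection of \<open>carr A\<close> into \<open>P\<close> (for \<open>P \<subseteq> carr A\<close>).\<close>

definition saturated :: "('a, 'r, 'c) struc \<Rightarrow> bool" where
  "saturated A \<longleftrightarrow> infinite (carr A) \<and>
    (\<forall>P \<subseteq> carr A. \<not> (\<exists>g. inj_on g (carr A) \<and> g ` carr A \<subseteq> P) \<longrightarrow>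
      (\<forall>\<Sigma> :: ('r, 'c + 'a) fm set.
         (\<forall>\<phi>\<in>\<Sigma>. FV \<phi> \<subseteq> {0} \<and> Inr -` csts \<phi> \<subseteq> P) \<and>
         (\<forall>\<Phi>\<subseteq>\<Sigma>. finite \<Phi> \<longrightarrow>
            (\<exists>a\<in>carr A. \<forall>\<phi>\<in>\<Phi>. sat (carr A) (rel A) (case_sum (cst A) id) (\<lambda>_. a) \<phi>))
         \<longrightarrow> (\<exists>a\<in>carr A. \<forall>\<phi>\<in>\<Sigma>. sat (carr A) (rel A) (case_sum (cst A) id) (\<lambda>_. a) \<phi>)))"

definition card_continuum :: "'a set \<Rightarrow> bool" where
  "card_continuum S \<longleftrightarrow> (\<exists>h. bij_betw h (UNIV :: nat set set) S)"

end

theory Submission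
  imports Defs "HOL-Library.Nat_Bijection" "HOL-Library.Infinite_Set"
begin


fun rels :: "('r, 'k) fm \<Rightarrow> 'r set" where
  "rels Bot = {}"
| "rels (Eq s t) = {}"
| "rels (Atom R ts) = {R}"
| "rels (Neg \<phi>) = rels \<phi>"
| "rels (Conj \<phi> \<psi>) = rels \<phi> \<union> rels \<psi>"
| "rels (Ex n \<phi>) = rels \<phi>"

lemma finite_rels: "finite (rels \<phi>)"
  by (induction \<phi>) auto

lemma finite_tcsts: "finite (tcsts t)"
  by (cases t) auto

lemma finite_csts: "finite (csts \<phi>)"
  by (induction \<phi>) (auto simp: finite_tcsts)

lemma teval_perm:
  assumes "\<forall>c\<in>tcsts t. \<pi> (ci c) = ci c" "\<forall>v\<in>tvars t. e' v = \<pi> (e v)"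
  shows "teval ci e' t = \<pi> (teval ci e t)"
  using assms by (cases t) auto

lemma sat_perm:
  assumes "bij \<pi>" "\<pi> ` D = D"
    and "\<forall>c\<in>csts \<phi>. \<pi> (ci c) = ci c"
    and "\<forall>R\<in>rels \<phi>. \<forall>xs. (map \<pi> xs \<in> rl R) = (xs \<in> rl R)"
    and "\<forall>v\<in>FV \<phi>. e' v = \<pi> (e v)"
  shows "sat D rl ci e \<phi> = sat D rl ci e' \<phi>"
  using assms(3-)
proof (induction \<phi> arbitrary: e e')
  case Bot
  then show ?case by simp
next
  case (Eq s t)
  have "teval ci e' s = \<pi> (teval ci e s)" "teval ci e' t = \<pi> (teval ci e t)"
    using Eq by (auto intro!: teval_perm)
  then show ?case using bij_is_inj[OF assms(1)] by (auto dest: injD)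
next
  case (Atom R ts)
  have m: "map (teval ci e') ts = map \<pi> (map (teval ci e) ts)"
    using Atom by (auto intro!: teval_perm)
  have "(map \<pi> (map (teval ci e) ts) \<in> rl R) = (map (teval ci e) ts \<in> rl R)"
  proof -
    have "\<forall>xs. (map \<pi> xs \<in> rl R) = (xs \<in> rl R)" using Atom.prems(2) by (simp only: rels.simps singleton_iff ball_simps simp_thms)
    then show ?thesis by (rule spec)
  qed
  then show ?case by (simp only: sat.simps m)
next
  case (Neg \<phi>)
  then show ?case by simp
next
  case (Conj \<phi> \<psi>)
  have "sat D rl ci e \<phi> = sat D rl ci e' \<phi>"
    by (rule Conj.IH(1)) (use Conj.prems in auto)
  moreover have "sat D rl ci e \<psi> = sat D rl ci e' \<psi>"
    by (rule Conj.IH(2)) (use Conj.prems in auto)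
  ultimately show ?case by simp
next
  case (Ex n \<phi>)
  have IH: "\<And>a. sat D rl ci (e(n := a)) \<phi> = sat D rl ci (e'(n := \<pi> a)) \<phi>"
    using Ex by (intro Ex.IH) auto
  show ?case
  proof
    assume "sat D rl ci e (Ex n \<phi>)"
    then obtain a where "a \<in> D" "sat D rl ci (e(n := a)) \<phi>" by auto
    then show "sat D rl ci e' (Ex n \<phi>)" using IH[of a] assms(2) by auto
  next
    assume "sat D rl ci e' (Ex n \<phi>)"
    then obtain a' where a': "a' \<in> D" "sat D rl ci (e'(n := a')) \<phi>" by auto
    then obtain a where "a \<in> D" "a' = \<pi> a" using assms(2) by auto
    then show "sat D rl ci e (Ex n \<phi>)" using IH[of a] a' by auto
  qed
qed

lemma teval_pp:
  assumes "\<forall>c\<in>tcsts t. h (\<lambda>i. ci c) = ci c" "\<forall>v\<in>tvars t. e' v = h (\<lambda>i. E i v)"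
  shows "teval ci e' t = h (\<lambda>i. teval ci (E i) t)"
  using assms by (cases t) auto

lemma sat_pp:
  fixes E :: "'i \<Rightarrow> nat \<Rightarrow> 'a"
  assumes "is_pp \<phi>"
    and "\<forall>t. (\<forall>i. t i \<in> D) \<longrightarrow> h t \<in> D"
    and "\<forall>c\<in>csts \<phi>. h (\<lambda>i. ci c) = ci c"
    and "\<forall>R\<in>rels \<phi>. \<forall>ts. (\<forall>i. map (\<lambda>t. t i) ts \<in> rl R) \<longrightarrow> map h ts \<in> rl R"
    and "\<forall>i. sat D rl ci (E i) \<phi>"
    and "\<forall>v\<in>FV \<phi>. e' v = h (\<lambda>i. E i v)"
  shows "sat D rl ci e' \<phi>"
  using assms(1,3-)
proof (induction \<phi> arbitrary: E e')
  case Bot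
  then show ?case by simp
next
  case (Eq s t)
  have "teval ci e' s = h (\<lambda>i. teval ci (E i) s)"
    by (rule teval_pp) (use Eq.prems in auto)
  moreover have "teval ci e' t = h (\<lambda>i. teval ci (E i) t)"
    by (rule teval_pp) (use Eq.prems in auto)
  moreover have "(\<lambda>i. teval ci (E i) s) = (\<lambda>i. teval ci (E i) t)"
    using Eq.prems by auto
  ultimately show ?case by simp
next
  case (Atom R ts)
  have m: "map (teval ci e') ts = map h (map (\<lambda>tm i. teval ci (E i) tm) ts)"
    using Atom.prems by (auto intro!: teval_pp)
  have A2: "\<forall>i. map (\<lambda>t. t i) (map (\<lambda>tm i. teval ci (E i) tm) ts) \<in> rl R"
    using Atom.prems by (simp add: comp_def)
  have A3: "\<forall>ts. (\<forall>i. map (\<lambda>t. t i) ts \<in> rl R) \<longrightarrow> map h ts \<in> rl R"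
    using Atom.prems(3) by simp
  have "map h (map (\<lambda>tm i. teval ci (E i) tm) ts) \<in> rl R" using A3[rule_format] A2 by blast
  then show ?case by (simp only: sat.simps m)
next
  case (Neg \<phi>)
  then show ?case by simp
next
  case (Conj \<phi> \<psi>)
  have "sat D rl ci e' \<phi>"
    by (rule Conj.IH(1)[of E]) (use Conj.prems in auto)
  moreover have "sat D rl ci e' \<psi>"
    by (rule Conj.IH(2)[of E]) (use Conj.prems in auto)
  ultimately show ?case by simp
next
  case (Ex n \<phi>)
  have "\<forall>i. \<exists>a\<in>D. sat D rl ci ((E i)(n := a)) \<phi>" using Ex.prems(4) by simp
  then obtain a where a: "\<forall>i. a i \<in> D \<and> sat D rl ci ((E i)(n := a i)) \<phi>" by metis
  have "sat D rl ci (e'(n := h a)) \<phi>"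
  proof (rule Ex.IH[where E="\<lambda>i. (E i)(n := a i)"])
    show "\<forall>i. sat D rl ci ((E i)(n := a i)) \<phi>" using a by blast
    show "\<forall>v\<in>FV \<phi>. (e'(n := h a)) v = h (\<lambda>i. ((E i)(n := a i)) v)"
      using Ex.prems(5) by auto
  qed (use Ex.prems in auto)
  moreover have "h a \<in> D" using assms(2) a by auto
  ultimately show ?case by auto
qed



definition in2 :: "nat set \<Rightarrow> nat set \<Rightarrow> bool" where
  "in2 s X \<longleftrightarrow> (s = {} \<and> 0 \<in> X) \<or> (\<exists>n. s = {Suc n} \<and> 0 \<notin> X \<and> X \<noteq> {Suc n})"

definition A2 :: "(nat set, nat set, nat set) struc" where
  "A2 = \<lparr>carr = UNIV, ar = (\<lambda>_. 1), rel = (\<lambda>s. {[X] | X. in2 s X}), cst = (\<lambda>_. {0})\<rparr>"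

lemma A2_simps [simp]: "carr A2 = UNIV" "ar A2 s = 1" "rel A2 s = {[X] | X. in2 s X}" "cst A2 c = {0}"
  by (simp_all add: A2_def)

definition sw :: "'a \<Rightarrow> 'a \<Rightarrow> 'a \<Rightarrow> 'a" where
  "sw a b x = (if x = a then b else if x = b then a else x)"

lemma sw_bij: "bij (sw a b)"
proof (rule o_bij)
  show "sw a b \<circ> sw a b = id" by (auto simp: sw_def fun_eq_iff)
  then show "sw a b \<circ> sw a b = id" .
qed

lemma map_unary: "(map f xs \<in> {[X] | X. P X}) = (\<exists>x. xs = [x] \<and> P (f x))"
  by (cases xs) auto

lemma swap2:
  assumes "\<forall>c\<in>csts \<phi>. ci c \<noteq> a \<and> ci c \<noteq> b"
    and "\<forall>n. {Suc n} \<in> rels \<phi> \<longrightarrow> a \<noteq> {Suc n} \<and> b \<noteq> {Suc n}"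
    and "(0 \<in> a) = (0 \<in> b)"
    and "\<forall>v\<in>FV \<phi>. e' v = sw a b (e v)"
  shows "sat UNIV (rel A2) ci e \<phi> = sat UNIV (rel A2) ci e' \<phi>"
proof (rule sat_perm[OF sw_bij])
  show "range (sw a b) = UNIV" by (rule bij_is_surj[OF sw_bij])
  show "\<forall>c\<in>csts \<phi>. sw a b (ci c) = ci c" using assms(1) by (auto simp: sw_def)
  show "\<forall>v\<in>FV \<phi>. e' v = sw a b (e v)" by fact
  show "\<forall>R\<in>rels \<phi>. \<forall>xs. (map (sw a b) xs \<in> rel A2 R) = (xs \<in> rel A2 R)"
  proof (intro ballI allI)
    fix R xs assume R: "R \<in> rels \<phi>"
    have ab: "in2 R a = in2 R b"
    proof (cases "\<exists>n. R = {Suc n}")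
      case True
      then obtain n where n: "R = {Suc n}" by blast
      then have "a \<noteq> {Suc n}" "b \<noteq> {Suc n}" using assms(2) R by auto
      then show ?thesis using n assms(3) unfolding in2_def by auto
    next
      case False
      then show ?thesis using assms(3) unfolding in2_def by auto
    qed
    have "in2 R (sw a b x) = in2 R x" for x
      using ab by (simp add: sw_def)
    then show "(map (sw a b) xs \<in> rel A2 R) = (xs \<in> rel A2 R)"
      by (cases xs) auto
  qed
qed

lemma in2_empty [simp]: "in2 {} X = (0 \<in> X)"
  by (auto simp: in2_def)

lemma in2_Suc [simp]: "in2 {Suc n} X = (0 \<notin> X \<and> X \<noteq> {Suc n})"
  by (auto simp: in2_def)

lemma infinite_nat_set_set: "infinite (UNIV :: nat set set)"
proof -
  have "inj (\<lambda>n::nat. {n})" by (auto intro: injI)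
  then have "infinite (range (\<lambda>n::nat. {n}))" by (rule range_inj_infinite)
  then show ?thesis by (rule infinite_super[OF subset_UNIV])
qed

lemma exists_Suc_not_in:
  assumes "finite S" shows "\<exists>n. {Suc n} \<notin> S"
proof (rule ccontr)
  assume "\<not> ?thesis"
  then have "range (\<lambda>n. {Suc n}) \<subseteq> S" by auto
  moreover have "infinite (range (\<lambda>n. {Suc n}))"
    by (rule range_inj_infinite) (auto intro: injI)
  ultimately show False using assms by (meson finite_subset)
qed

definition E2 :: "(nat set, nat set + nat set) fm \<Rightarrow> nat set set" where
  "E2 \<phi> = insert {0} (Inr -` csts \<phi> \<union> (\<lambda>n. {Suc n}) ` ((\<lambda>n. {Suc n}) -` rels \<phi>))"

lemma finite_E2: "finite (E2 \<phi>)"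
proof -
  have "finite (Inr -` csts \<phi> :: nat set set)"
    by (rule finite_vimageI[OF finite_csts]) simp
  moreover have "finite ((\<lambda>n::nat. {Suc n}) -` rels \<phi>)"
    by (rule finite_vimageI[OF finite_rels]) (auto intro: injI)
  ultimately show ?thesis unfolding E2_def by (simp only: finite_insert finite_Un finite_imageI)
qed

lemma key2:
  assumes "a \<notin> E2 \<phi>" "b \<notin> E2 \<phi>" "(0 \<in> a) = (0 \<in> b)"
  shows "sat UNIV (rel A2) (case_sum (cst A2) id) (\<lambda>_. a) \<phi> =
         sat UNIV (rel A2) (case_sum (cst A2) id) (\<lambda>_. b) \<phi>"
proof (rule swap2)
  show "\<forall>c\<in>csts \<phi>. case_sum (cst A2) id c \<noteq> a \<and> case_sum (cst A2) id c \<noteq> b"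
  proof
    fix c assume c: "c \<in> csts \<phi>"
    show "case_sum (cst A2) id c \<noteq> a \<and> case_sum (cst A2) id c \<noteq> b"
    proof (cases c)
      case (Inl x) then show ?thesis using assms(1,2) by (auto simp: E2_def)
    next
      case (Inr p)
      then have "p \<in> E2 \<phi>" using c by (auto simp: E2_def)
      then show ?thesis using Inr assms(1,2) by auto
    qed
  qed
  show "\<forall>n. {Suc n} \<in> rels \<phi> \<longrightarrow> a \<noteq> {Suc n} \<and> b \<noteq> {Suc n}"
    using assms(1,2) by (auto simp: E2_def)
  show "(0 \<in> a) = (0 \<in> b)" by fact
  show "\<forall>v\<in>FV \<phi>. b = sw a b a" by (simp add: sw_def)
qed

lemma A2_sat: "saturated A2"
  unfolding saturated_def
proof (intro conjI allI impI)
  show "infinite (carr A2)" using infinite_nat_set_set by simp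
next
  fix P :: "nat set set" and \<Sigma> :: "(nat set, nat set + nat set) fm set"
  assume noinj: "\<not> (\<exists>g. inj_on g (carr A2) \<and> g ` carr A2 \<subseteq> P)"
  assume H: "(\<forall>\<phi>\<in>\<Sigma>. FV \<phi> \<subseteq> {0} \<and> Inr -` csts \<phi> \<subseteq> P) \<and>
       (\<forall>\<Phi>\<subseteq>\<Sigma>. finite \<Phi> \<longrightarrow>
          (\<exists>a\<in>carr A2. \<forall>\<phi>\<in>\<Phi>. sat (carr A2) (rel A2) (case_sum (cst A2) id) (\<lambda>_. a) \<phi>))"
  define gB :: "nat set \<Rightarrow> nat set" where "gB Y = insert 0 (insert 1 ((+) 2 ` Y))" for Y
  define gR :: "nat set \<Rightarrow> nat set" where "gR Y = insert 1 (insert 2 ((+) 3 ` Y))" for Y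
  have ijB: "inj gB"
  proof (rule injI)
    fix Y Y' assume "gB Y = gB Y'"
    have m: "(x \<in> Z) = (x + 2 \<in> gB Z)" for x Z
    proof -
      have "(x + 2 \<in> (+) 2 ` Z) = (x \<in> Z)" by force
      then show ?thesis unfolding gB_def by simp
    qed
    show "Y = Y'"
    proof (rule set_eqI)
      fix x show "(x \<in> Y) = (x \<in> Y')" using m[of x Y] m[of x Y'] \<open>gB Y = gB Y'\<close> by simp
    qed
  qed
  have ijR: "inj gR"
  proof (rule injI)
    fix Y Y' assume "gR Y = gR Y'"
    have m: "(x \<in> Z) = (x + 3 \<in> gR Z)" for x Z
    proof -
      have "(x + 3 \<in> (+) 3 ` Z) = (x \<in> Z)" by force
      then show ?thesis unfolding gR_def by simp
    qed
    show "Y = Y'"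
    proof (rule set_eqI)
      fix x show "(x \<in> Y) = (x \<in> Y')" using m[of x Y] m[of x Y'] \<open>gR Y = gR Y'\<close> by simp
    qed
  qed
  have "\<not> (\<forall>Y. gB Y \<in> P)"
  proof
    assume "\<forall>Y. gB Y \<in> P"
    then have "inj_on gB (carr A2) \<and> gB ` carr A2 \<subseteq> P" using ijB by auto
    with noinj show False by blast
  qed
  then obtain YB where YB: "gB YB \<notin> P" by blast
  have "\<not> (\<forall>Y. gR Y \<in> P)"
  proof
    assume "\<forall>Y. gR Y \<in> P"
    then have "inj_on gR (carr A2) \<and> gR ` carr A2 \<subseteq> P" using ijR by auto
    with noinj show False by blast
  qed
  then obtain YR where YR: "gR YR \<notin> P" by blast
  define bB where "bB = gB YB"
  define bR where "bR = gR YR"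
  have bB0: "0 \<in> bB" and bR0: "0 \<notin> bR" unfolding bB_def bR_def gB_def gR_def by auto
  have bBE: "bB \<notin> E2 \<phi>" if "\<phi> \<in> \<Sigma>" for \<phi>
  proof -
    have "bB \<noteq> {0}" "\<forall>n. bB \<noteq> {Suc n}" unfolding bB_def gB_def by auto
    moreover have "bB \<notin> Inr -` csts \<phi>"
    proof
      assume "bB \<in> Inr -` csts \<phi>"
      moreover have "Inr -` csts \<phi> \<subseteq> P" using H that by blast
      ultimately show False using YB bB_def by blast
    qed
    ultimately show ?thesis unfolding E2_def by auto
  qed
  have bRE: "bR \<notin> E2 \<phi>" if "\<phi> \<in> \<Sigma>" for \<phi>
  proof -
    have "bR \<noteq> {0}" unfolding bR_def gR_def by auto
    moreover have "\<forall>n. bR \<noteq> {Suc n}"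
    proof
      fix n show "bR \<noteq> {Suc n}"
      proof
        assume "bR = {Suc n}"
        then have "1 \<in> {Suc n}" "2 \<in> {Suc n}" unfolding bR_def gR_def by auto
        then show False by auto
      qed
    qed
    moreover have "bR \<notin> Inr -` csts \<phi>"
    proof
      assume "bR \<in> Inr -` csts \<phi>"
      moreover have "Inr -` csts \<phi> \<subseteq> P" using H that by blast
      ultimately show False using YR bR_def by blast
    qed
    ultimately show ?thesis unfolding E2_def by auto
  qed
  let ?s = "\<lambda>a \<phi>. sat UNIV (rel A2) (case_sum (cst A2) id) (\<lambda>_. a) \<phi>"
  show "\<exists>a\<in>carr A2. \<forall>\<phi>\<in>\<Sigma>. sat (carr A2) (rel A2) (case_sum (cst A2) id) (\<lambda>_. a) \<phi>"
  proof (rule ccontr)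
    assume "\<not> ?thesis"
    then have "\<forall>a. \<exists>\<phi>\<in>\<Sigma>. \<not> ?s a \<phi>" by auto
    then obtain \<psi> where \<psi>: "\<And>a. \<psi> a \<in> \<Sigma>" "\<And>a. \<not> ?s a (\<psi> a)" by metis
    define F where "F = {bB, bR} \<union> E2 (\<psi> bB) \<union> E2 (\<psi> bR)"
    have "finite F" unfolding F_def using finite_E2 by auto
    then have "finite (\<psi> ` F)" by simp
    moreover have "\<psi> ` F \<subseteq> \<Sigma>" using \<psi> by auto
    ultimately have "\<exists>a\<in>carr A2. \<forall>\<phi>\<in>\<psi> ` F. sat (carr A2) (rel A2) (case_sum (cst A2) id) (\<lambda>_. a) \<phi>"
      using H by blast
    then obtain a where a: "\<forall>\<phi>\<in>\<psi> ` F. ?s a \<phi>" by auto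
    show False
    proof (cases "a \<in> F")
      case True
      then show ?thesis using a \<psi>(2) by auto
    next
      case False
      show ?thesis
      proof (cases "0 \<in> a")
        case True
        have "a \<notin> E2 (\<psi> bB)" using False F_def by auto
        then have "?s a (\<psi> bB) = ?s bB (\<psi> bB)"
          using key2 bBE[OF \<psi>(1)] True bB0 by blast
        moreover have "?s a (\<psi> bB)" using a F_def by auto
        ultimately show False using \<psi>(2) by blast
      next
        case nz: False
        have "a \<notin> E2 (\<psi> bR)" using False F_def by auto
        then have "?s a (\<psi> bR) = ?s bR (\<psi> bR)"
          using key2 bRE[OF \<psi>(1)] nz bR0 by blast
        moreover have "?s a (\<psi> bR)" using a F_def by auto
        ultimately show False using \<psi>(2) by blast
      qed
    qed
  qed
qed

lemma A2_wf: "wf_struc A2"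
  unfolding wf_struc_def by auto

lemma A2_card: "card_continuum (carr A2)"
  unfolding card_continuum_def by (auto intro: bij_betw_id)

definition R1 :: "nat set list set" where
  "R1 = {[X] | X. 0 \<notin> X \<and> (\<forall>n. X \<noteq> {Suc n})}"

lemma R1_inv_aux: "(I, f) \<in> Pol_omega A2 \<Longrightarrow> preserves A2 I f 1 R1"
proof -
  assume "(I, f) \<in> Pol_omega A2"
  then have hp: "\<And>s. preserves A2 I f 1 (rel A2 s)"
    unfolding Pol_omega_def is_hom_power_def by auto
  show "preserves A2 I f 1 R1"
    unfolding preserves_def
  proof (intro allI impI)
    fix ts :: "(nat \<Rightarrow> nat set) list"
    assume A: "length ts = 1 \<and> set ts \<subseteq> (I \<rightarrow>\<^sub>E carr A2) \<and> (\<forall>i\<in>I. map (\<lambda>t. t i) ts \<in> R1)"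
    then obtain t where t: "ts = [t]" by (cases ts) auto
    have "in2 {Suc n} (f t)" for n
    proof -
      have "map f [t] \<in> rel A2 {Suc n}"
      proof (rule hp[of "{Suc n}", unfolded preserves_def A2_simps(2), rule_format, of "[t]"])
        show "length [t] = 1 \<and> set [t] \<subseteq> (I \<rightarrow>\<^sub>E carr A2) \<and> (\<forall>i\<in>I. map (\<lambda>t. t i) [t] \<in> rel A2 {Suc n})"
          using A by (auto simp: t R1_def)
      qed
      then have "map f ts \<in> rel A2 {Suc n}" by (simp add: t)
      then show ?thesis by (auto simp: t)
    qed
    then have "0 \<notin> f t \<and> (\<forall>n. f t \<noteq> {Suc n})" by auto
    then show "map f ts \<in> R1" by (auto simp: t R1_def)
  qed
qed

lemma R1_inv: "(1, R1) \<in> Inv A2 (Pol_omega A2)"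
  unfolding Inv_def using R1_inv_aux by (auto simp: R1_def tuples_def)

lemma R1_not_fo: "(1, R1) \<notin> fo_rels A2"
proof
  assume "(1, R1) \<in> fo_rels A2"
  then obtain \<phi> where fv: "FV \<phi> \<subseteq> {..<1}" and R: "R1 = defined_by A2 1 \<phi>"
    unfolding fo_rels_def by auto
  obtain N where N: "{Suc N} \<notin> rels \<phi>" using exists_Suc_not_in[OF finite_rels] by blast
  have "[{}] \<in> R1" by (auto simp: R1_def)
  then have "[{}] \<in> defined_by A2 1 \<phi>" using R by simp
  then have s0: "sat UNIV (rel A2) (cst A2) (\<lambda>i. [{}] ! i) \<phi>"
    by (simp add: defined_by_def)
  have "sat UNIV (rel A2) (cst A2) (\<lambda>i. [{}] ! i) \<phi> = sat UNIV (rel A2) (cst A2) (\<lambda>i. [{Suc N}] ! i) \<phi>"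
  proof (rule swap2)
    show "\<forall>c\<in>csts \<phi>. cst A2 c \<noteq> {} \<and> cst A2 c \<noteq> {Suc N}" by simp
    show "\<forall>n. {Suc n} \<in> rels \<phi> \<longrightarrow> {} \<noteq> {Suc n} \<and> {Suc N} \<noteq> {Suc n}" using N by auto
    show "(0 \<in> ({}::nat set)) = (0 \<in> {Suc N})" by simp
    show "\<forall>v\<in>FV \<phi>. [{Suc N}] ! v = sw {} {Suc N} ([{}] ! v)" using fv by (auto simp: sw_def)
  qed
  with s0 have "[{Suc N}] \<in> defined_by A2 1 \<phi>"
    by (simp add: defined_by_def tuples_def)
  then show False using R by (auto simp: R1_def)
qed

lemma part1: "Inv A2 (Pol_omega A2) \<noteq> pp_rels A2"
proof
  assume "Inv A2 (Pol_omega A2) = pp_rels A2"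
  then have "(1, R1) \<in> pp_rels A2" using R1_inv by simp
  then have "(1, R1) \<in> fo_rels A2" unfolding pp_rels_def fo_rels_def by auto
  then show False using R1_not_fo by simp
qed

definition R2 :: "nat set list set" where
  "R2 = {[X] | X. 0 \<notin> X}"

lemma R2_inv_aux: "(I, f) \<in> Pol A2 \<Longrightarrow> preserves A2 I f 1 R2"
proof -
  assume "(I, f) \<in> Pol A2"
  then obtain k where I: "I = {..<k}" and hp: "\<And>s. preserves A2 I f 1 (rel A2 s)"
    unfolding Pol_def is_hom_power_def by auto
  show "preserves A2 I f 1 R2"
    unfolding preserves_def
  proof (intro allI impI)
    fix ts :: "(nat \<Rightarrow> nat set) list"
    assume A: "length ts = 1 \<and> set ts \<subseteq> (I \<rightarrow>\<^sub>E carr A2) \<and> (\<forall>i\<in>I. map (\<lambda>t. t i) ts \<in> R2)"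
    then obtain t where t: "ts = [t]" by (cases ts) auto
    have "finite (t ` I)" using I by simp
    then obtain n where n: "{Suc n} \<notin> t ` I" using exists_Suc_not_in by blast
    have "map f [t] \<in> rel A2 {Suc n}"
    proof (rule hp[of "{Suc n}", unfolded preserves_def A2_simps(2), rule_format, of "[t]"])
      show "length [t] = 1 \<and> set [t] \<subseteq> (I \<rightarrow>\<^sub>E carr A2) \<and> (\<forall>i\<in>I. map (\<lambda>t. t i) [t] \<in> rel A2 {Suc n})"
        using A n by (auto simp: t R2_def)
    qed
    then have "map f ts \<in> rel A2 {Suc n}" by (simp add: t)
    then show "map f ts \<in> R2" by (auto simp: t R2_def)
  qed
qed

lemma R2_inv: "(1, R2) \<in> Inv A2 (Pol A2)"
  unfolding Inv_def using R2_inv_aux by (auto simp: R2_def tuples_def)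

lemma R2_fo: "(1, R2) \<in> fo_rels A2"
  unfolding fo_rels_def
proof (safe)
  show "\<exists>\<phi>. FV \<phi> \<subseteq> {..<1} \<and> R2 = defined_by A2 1 \<phi>"
  proof (intro exI conjI)
    show "FV (Neg (Atom {} [Var 0]) :: (nat set, nat set) fm) \<subseteq> {..<1}" by simp
    show "R2 = defined_by A2 1 (Neg (Atom {} [Var 0]))"
    proof (rule set_eqI)
      fix xs :: "nat set list"
      show "(xs \<in> R2) = (xs \<in> defined_by A2 1 (Neg (Atom {} [Var 0])))"
        by (cases xs) (auto simp: R2_def defined_by_def tuples_def)
    qed
  qed
qed

lemma R2_not_pp: "(1, R2) \<notin> pp_rels A2"
proof
  assume "(1, R2) \<in> pp_rels A2"
  then obtain \<phi> where pp: "is_pp \<phi>" and fv: "FV \<phi> \<subseteq> {..<1}" and R: "R2 = defined_by A2 1 \<phi>"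
    unfolding pp_rels_def by auto
  define h :: "(nat \<Rightarrow> nat set) \<Rightarrow> nat set" where
    "h t = (if t = (\<lambda>i. {Suc i}) then {0} else t 0)" for t
  have ne: "(\<lambda>i::nat. {0::nat}) \<noteq> (\<lambda>i. {Suc i})" by (metis Suc_neq_Zero singleton_inject)
  have "sat UNIV (rel A2) (cst A2) (\<lambda>v. [{0}] ! v) \<phi>"
  proof (rule sat_pp[OF pp, where h = h and E = "\<lambda>i v. [{Suc i}] ! v"])
    show "\<forall>t. (\<forall>i. t i \<in> UNIV) \<longrightarrow> h t \<in> UNIV" by simp
    show "\<forall>c\<in>csts \<phi>. h (\<lambda>i. cst A2 c) = cst A2 c" using ne by (simp add: h_def)
    show "\<forall>R\<in>rels \<phi>. \<forall>ts. (\<forall>i. map (\<lambda>t. t i) ts \<in> rel A2 R) \<longrightarrow> map h ts \<in> rel A2 R"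
    proof (intro ballI allI impI)
      fix R :: "nat set" and ts :: "(nat \<Rightarrow> nat set) list"
      assume A: "\<forall>i. map (\<lambda>t. t i) ts \<in> rel A2 R"
      then obtain t where t: "ts = [t]" by (cases ts) auto
      have it: "in2 R (t i)" for i using A[rule_format, of i] by (auto simp: t)
      have "t \<noteq> (\<lambda>i. {Suc i})"
      proof
        assume tt: "t = (\<lambda>i. {Suc i})"
        have "in2 R {1}" using it[of 0] tt by simp
        then obtain n where n: "R = {Suc n}" by (auto simp: in2_def)
        have "in2 R {Suc n}" using it[of n] tt by simp
        then show False using n by simp
      qed
      then show "map h ts \<in> rel A2 R" using it[of 0] by (auto simp: t h_def)
    qed
    show "\<forall>i. sat UNIV (rel A2) (cst A2) (\<lambda>v. [{Suc i}] ! v) \<phi>"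
    proof
      fix i
      have "[{Suc i}] \<in> R2" by (auto simp: R2_def)
      then have "[{Suc i}] \<in> defined_by A2 1 \<phi>" using R by simp
      then show "sat UNIV (rel A2) (cst A2) (\<lambda>v. [{Suc i}] ! v) \<phi>"
        by (simp add: defined_by_def)
    qed
    show "\<forall>v\<in>FV \<phi>. [{0}] ! v = h (\<lambda>i. [{Suc i}] ! v)" using fv by (auto simp: h_def)
  qed
  then have "[{0}] \<in> defined_by A2 1 \<phi>" by (simp add: defined_by_def tuples_def)
  then show False using R by (auto simp: R2_def)
qed

lemma part2: "Inv A2 (Pol A2) \<inter> fo_rels A2 \<noteq> pp_rels A2"
  using R2_inv R2_fo R2_not_pp by blast

definition slice :: "nat \<Rightarrow> nat set \<Rightarrow> nat set" where
  "slice k s = {m. prod_encode (k, m) \<in> s}"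

definition in3 :: "nat set \<Rightarrow> nat set \<Rightarrow> bool" where
  "in3 s X \<longleftrightarrow> X \<noteq> {} \<and> (\<exists>k. X = slice k s)"

definition A3 :: "(nat set, nat set, nat set) struc" where
  "A3 = \<lparr>carr = UNIV, ar = (\<lambda>_. 1), rel = (\<lambda>s. {[X] | X. in3 s X}), cst = (\<lambda>_. {})\<rparr>"

lemma A3_simps [simp]: "carr A3 = UNIV" "ar A3 s = 1" "rel A3 s = {[X] | X. in3 s X}" "cst A3 c = {}"
  by (simp_all add: A3_def)

lemma A3_wf: "wf_struc A3"
  unfolding wf_struc_def by auto

definition R3 :: "nat set list set" where
  "R3 = {[X] | X. X \<noteq> {}}"

lemma R3_inv_aux: "(I, f) \<in> Pol_omega A3 \<Longrightarrow> preserves A3 I f 1 R3"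
proof -
  assume "(I, f) \<in> Pol_omega A3"
  then have hp: "\<And>s. preserves A3 I f 1 (rel A3 s)"
    unfolding Pol_omega_def is_hom_power_def by auto
  show "preserves A3 I f 1 R3"
    unfolding preserves_def
  proof (intro allI impI)
    fix ts :: "(nat \<Rightarrow> nat set) list"
    assume A: "length ts = 1 \<and> set ts \<subseteq> (I \<rightarrow>\<^sub>E carr A3) \<and> (\<forall>i\<in>I. map (\<lambda>t. t i) ts \<in> R3)"
    then obtain t where t: "ts = [t]" by (cases ts) auto
    define s where "s = {prod_encode (k, m) | k m. k \<in> I \<and> m \<in> t k}"
    have sl: "slice i s = t i" if "i \<in> I" for i
      using that by (auto simp: slice_def s_def)
    have "map f [t] \<in> rel A3 s"
    proof (rule hp[of s, unfolded preserves_def A3_simps(2), rule_format, of "[t]"])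
      show "length [t] = 1 \<and> set [t] \<subseteq> (I \<rightarrow>\<^sub>E carr A3) \<and> (\<forall>i\<in>I. map (\<lambda>t. t i) [t] \<in> rel A3 s)"
        using A sl by (auto simp: t R3_def in3_def)
    qed
    then show "map f ts \<in> R3" by (auto simp: t R3_def in3_def)
  qed
qed

lemma R3_inv: "(1, R3) \<in> Inv A3 (Pol_omega A3)"
  unfolding Inv_def using R3_inv_aux by (auto simp: R3_def tuples_def)

lemma R3_fo: "(1, R3) \<in> fo_rels A3"
  unfolding fo_rels_def
proof (safe)
  show "\<exists>\<phi>. FV \<phi> \<subseteq> {..<1} \<and> R3 = defined_by A3 1 \<phi>"
  proof (intro exI conjI)
    show "FV (Neg (Eq (Var 0) (Cst {})) :: (nat set, nat set) fm) \<subseteq> {..<1}" by simp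
    show "R3 = defined_by A3 1 (Neg (Eq (Var 0) (Cst {})))"
    proof (rule set_eqI)
      fix xs :: "nat set list"
      show "(xs \<in> R3) = (xs \<in> defined_by A3 1 (Neg (Eq (Var 0) (Cst {}))))"
        by (cases xs) (auto simp: R3_def defined_by_def tuples_def)
    qed
  qed
qed

lemma diag_slice: "\<exists>j. \<forall>k. insert 0 j \<noteq> slice k s"
proof
  define j where "j = {Suc k | k. Suc k \<notin> slice k s}"
  show "\<forall>k. insert 0 j \<noteq> slice k s"
  proof
    fix k
    have "(Suc k \<in> insert 0 j) = (Suc k \<notin> slice k s)" by (auto simp: j_def)
    then show "insert 0 j \<noteq> slice k s" by auto
  qed
qed

lemma R3_not_pp: "(1, R3) \<notin> pp_rels A3"
proof
  assume "(1, R3) \<in> pp_rels A3"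
  then obtain \<phi> where pp: "is_pp \<phi>" and fv: "FV \<phi> \<subseteq> {..<1}" and R: "R3 = defined_by A3 1 \<phi>"
    unfolding pp_rels_def by auto
  define h :: "(nat set \<Rightarrow> nat set) \<Rightarrow> nat set" where
    "h t = (if t = (\<lambda>j. insert 0 j) then {} else t {0})" for t
  have ne: "(\<lambda>j::nat set. {}::nat set) \<noteq> (\<lambda>j. insert 0 j)" by (metis insert_not_empty)
  have "sat UNIV (rel A3) (cst A3) (\<lambda>v. [{}] ! v) \<phi>"
  proof (rule sat_pp[OF pp, where h = h and E = "\<lambda>j v. [insert 0 j] ! v"])
    show "\<forall>t. (\<forall>i. t i \<in> UNIV) \<longrightarrow> h t \<in> UNIV" by simp
    show "\<forall>c\<in>csts \<phi>. h (\<lambda>i. cst A3 c) = cst A3 c" using ne by (simp add: h_def)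
    show "\<forall>R\<in>rels \<phi>. \<forall>ts. (\<forall>i. map (\<lambda>t. t i) ts \<in> rel A3 R) \<longrightarrow> map h ts \<in> rel A3 R"
    proof (intro ballI allI impI)
      fix R :: "nat set" and ts :: "(nat set \<Rightarrow> nat set) list"
      assume A: "\<forall>i. map (\<lambda>t. t i) ts \<in> rel A3 R"
      then obtain t where t: "ts = [t]" by (cases ts) auto
      have it: "in3 R (t i)" for i using A[rule_format, of i] by (auto simp: t)
      have "t \<noteq> (\<lambda>j. insert 0 j)"
      proof
        assume tt: "t = (\<lambda>j. insert 0 j)"
        obtain j where j: "\<forall>k. insert 0 j \<noteq> slice k R" using diag_slice by blast
        have "in3 R (insert 0 j)" using it[of j] tt by simp
        then show False using j by (auto simp: in3_def)
      qed
      then show "map h ts \<in> rel A3 R" using it[of "{0}"] by (auto simp: t h_def)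
    qed
    show "\<forall>i. sat UNIV (rel A3) (cst A3) (\<lambda>v. [insert 0 i] ! v) \<phi>"
    proof
      fix i :: "nat set"
      have "[insert 0 i] \<in> R3" by (auto simp: R3_def)
      then have "[insert 0 i] \<in> defined_by A3 1 \<phi>" using R by simp
      then show "sat UNIV (rel A3) (cst A3) (\<lambda>v. [insert 0 i] ! v) \<phi>"
        by (simp add: defined_by_def)
    qed
    show "\<forall>v\<in>FV \<phi>. [{}] ! v = h (\<lambda>i. [insert 0 i] ! v)" using fv by (auto simp: h_def)
  qed
  then have "[{}] \<in> defined_by A3 1 \<phi>" by (simp add: defined_by_def tuples_def)
  then show False using R by (auto simp: R3_def)
qed

lemma part3: "Inv A3 (Pol_omega A3) \<inter> fo_rels A3 \<noteq> pp_rels A3"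
  using R3_inv R3_fo R3_not_pp by blast

theorem proposition5:
  shows "(\<exists>A :: (nat set, nat set, nat set) struc.
            wf_struc A \<and> saturated A \<and> card_continuum (carr A) \<and>
            Inv A (Pol_omega A) \<noteq> pp_rels A)
       \<and> (\<exists>A :: (nat set, nat set, nat set) struc.
            wf_struc A \<and> saturated A \<and> card_continuum (carr A) \<and>
            Inv A (Pol A) \<inter> fo_rels A \<noteq> pp_rels A)
       \<and> (\<exists>A :: (nat set, nat set, nat set) struc.
            wf_struc A \<and> Inv A (Pol_omega A) \<inter> fo_rels A \<noteq> pp_rels A)"
  using A2_wf A2_sat A2_card part1 part2 A3_wf part3 by blast

end
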